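(* Let $k,d$ be positive integers, let $\ell = \lceil \frac{d}{k+1}\rceil - 1$ and $d' = d + \left\lceil k\ell\left(\frac{d}{k+1} - \frac{1}{2}(\ell+1)\right)\right\rceil$. Let $T$ be a tree with at least $d'+1$ edges. Then $T$ contains a vertex $r$ such that for every edge $e \in E(T)$ incident to $r$, the connected component of $T - e$ containing $r$ has at least $\ell+1$ edges. *)

theory Defs
  imports Complex_Main
begin

definition simple_graph :: "'a set \<Rightarrow> 'a set set \<Rightarrow> bool" where
  "simple_graph V E \<longleftrightarrow> finite V \<and> (\<forall>e\<in>E. \<exists>u v. e = {u, v} \<and> u \<noteq> v \<and> u \<in> V \<and> v \<in> V)"

definition adj_rel :: "'a set set \<Rightarrow> ('a \<times> 'a) set" where
  "adj_rel E = {(u, v). {u, v} \<in> E}"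

definition reachable :: "'a set set \<Rightarrow> 'a \<Rightarrow> 'a \<Rightarrow> bool" where
  "reachable E u v \<longleftrightarrow> (u, v) \<in> (adj_rel E)\<^sup>*"

definition connected_graph :: "'a set \<Rightarrow> 'a set set \<Rightarrow> bool" where
  "connected_graph V E \<longleftrightarrow> (\<forall>u\<in>V. \<forall>v\<in>V. reachable E u v)"

definition is_cycle :: "'a set set \<Rightarrow> 'a list \<Rightarrow> bool" where
  "is_cycle E cs \<longleftrightarrow> length cs \<ge> 3 \<and> distinct cs \<and>
     (\<forall>i. Suc i < length cs \<longrightarrow> {cs ! i, cs ! Suc i} \<in> E) \<and>
     {last cs, hd cs} \<in> E"

definition acyclic_graph :: "'a set set \<Rightarrow> bool" where
  "acyclic_graph E \<longleftrightarrow> (\<nexists>cs. is_cycle E cs)"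

definition is_tree :: "'a set \<Rightarrow> 'a set set \<Rightarrow> bool" where
  "is_tree V E \<longleftrightarrow> simple_graph V E \<and> V \<noteq> {} \<and> connected_graph V E \<and> acyclic_graph E"

definition component_edges :: "'a set set \<Rightarrow> 'a \<Rightarrow> 'a set set" where
  "component_edges E r = {e \<in> E. \<forall>x\<in>e. reachable E r x}"

end

theory Submission
  imports Defs
begin


fun gwalk :: "'a set set \<Rightarrow> 'a list \<Rightarrow> bool" where
  "gwalk E (x # y # xs) = ({x, y} \<in> E \<and> gwalk E (y # xs))"
| "gwalk E _ = True"

lemma gwalk_append:
  "gwalk E (xs @ ys) \<longleftrightarrow> gwalk E xs \<and> gwalk E ys \<and> (xs \<noteq> [] \<and> ys \<noteq> [] \<longrightarrow> {last xs, hd ys} \<in> E)"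
proof (induction xs)
  case Nil
  then show ?case by simp
next
  case (Cons x xs)
  then show ?case by (cases xs; cases ys) auto
qed

lemma gwalk_join: "gwalk E (xs @ [x]) \<Longrightarrow> gwalk E (x # ys) \<Longrightarrow> gwalk E (xs @ x # ys)"
  using gwalk_append[of E "xs @ [x]" ys] by (cases ys) auto

lemma gwalk_mono: "gwalk E xs \<Longrightarrow> E \<subseteq> F \<Longrightarrow> gwalk F xs"
  by (induction E xs rule: gwalk.induct) auto

lemma gwalk_nth: "gwalk E cs \<Longrightarrow> Suc i < length cs \<Longrightarrow> {cs!i, cs!Suc i} \<in> E"
proof (induction E cs arbitrary: i rule: gwalk.induct)
  case (1 E x y xs)
  then show ?case by (cases i) auto
qed auto

lemma reach_mono: "E \<subseteq> F \<Longrightarrow> reachable E u v \<Longrightarrow> reachable F u v"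
proof -
  assume "E \<subseteq> F" "reachable E u v"
  have "adj_rel E \<subseteq> adj_rel F" using \<open>E \<subseteq> F\<close> unfolding adj_rel_def by auto
  then show ?thesis using \<open>reachable E u v\<close> unfolding reachable_def using rtrancl_mono by blast
qed

lemma reach_refl: "reachable E u u"
  unfolding reachable_def by simp

lemma reach_step: "reachable E u v \<Longrightarrow> {v, w} \<in> E \<Longrightarrow> reachable E u w"
  unfolding reachable_def adj_rel_def by (simp add: rtrancl.rtrancl_into_rtrancl)

lemma reach_step_front: "{u, v} \<in> E \<Longrightarrow> reachable E v w \<Longrightarrow> reachable E u w"
  unfolding reachable_def adj_rel_def by (simp add: converse_rtrancl_into_rtrancl)

lemma reach_walk:
  assumes "reachable E u v"
  shows "\<exists>xs. gwalk E xs \<and> xs \<noteq> [] \<and> hd xs = u \<and> last xs = v"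
  using assms unfolding reachable_def
proof (induction rule: rtrancl_induct)
  case base
  then show ?case by (intro exI[of _ "[u]"]) auto
next
  case (step y z)
  then obtain xs where "gwalk E xs" "xs \<noteq> []" "hd xs = u" "last xs = y" by blast
  moreover have "{y, z} \<in> E" using step(2) unfolding adj_rel_def by auto
  ultimately show ?case by (intro exI[of _ "xs @ [z]"]) (auto simp: gwalk_append)
qed

lemma walk_distinct:
  "gwalk E xs \<Longrightarrow> xs \<noteq> [] \<Longrightarrow> \<exists>ys. gwalk E ys \<and> distinct ys \<and> ys \<noteq> [] \<and> hd ys = hd xs \<and> last ys = last xs"
proof (induction "length xs" arbitrary: xs rule: less_induct)
  case less
  show ?case
  proof (cases "distinct xs")
    case True
    then show ?thesis using less by blast
  next
    case False
    then obtain ys x zs us where xs: "xs = ys @ [x] @ zs @ [x] @ us"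
      using not_distinct_decomp by blast
    define xs' where "xs' = ys @ [x] @ us"
    have "length xs' < length xs" using xs xs'_def by simp
    moreover have "gwalk E xs'"
    proof -
      have "gwalk E ((ys @ [x]) @ (zs @ [x] @ us))" using less(2) xs by simp
      then have 1: "gwalk E (ys @ [x])" and "gwalk E ((zs @ [x]) @ us)"
        using gwalk_append[of E "ys @ [x]" "zs @ [x] @ us"] by auto
      then have "gwalk E (x # us)" using gwalk_append[of E "zs @ [x]" us] by (cases us) auto
      then show ?thesis using gwalk_join[OF 1] unfolding xs'_def by simp
    qed
    moreover have "xs' \<noteq> []" "hd xs' = hd xs" "last xs' = last xs"
      unfolding xs xs'_def by (cases ys; cases us; auto)+
    ultimately show ?thesis using less(1)[of xs'] by metis
  qed
qed

lemma short_list: "length ys < 3 \<Longrightarrow> ys = [] \<or> (\<exists>y. ys = [y]) \<or> (\<exists>y z. ys = [y, z])"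
  by (cases ys; cases "tl ys"; cases "tl (tl ys)") auto

lemma edge_distinct: "simple_graph V E \<Longrightarrow> {u, v} \<in> E \<Longrightarrow> u \<noteq> v"
  unfolding simple_graph_def by (metis doubleton_eq_iff insert_absorb2)

lemma edge_in_V: "simple_graph V E \<Longrightarrow> {u, v} \<in> E \<Longrightarrow> u \<in> V \<and> v \<in> V"
  unfolding simple_graph_def by (metis doubleton_eq_iff)

lemma core:
  assumes "is_tree V E" "{a, b} \<in> E" "a \<noteq> b"
  shows "\<not> reachable (E - {{a, b}}) a b"
proof
  assume "reachable (E - {{a, b}}) a b"
  then obtain xs where "gwalk (E - {{a, b}}) xs" "xs \<noteq> []" "hd xs = a" "last xs = b"
    using reach_walk[of "E - {{a, b}}" a b] by blast
  then obtain ys where ys: "gwalk (E - {{a, b}}) ys" "distinct ys" "ys \<noteq> []" "hd ys = a" "last ys = b"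
    using walk_distinct[of "E - {{a, b}}" xs] by auto
  have "length ys \<ge> 3"
  proof (rule ccontr)
    assume "\<not> 3 \<le> length ys"
    then have "ys = [] \<or> (\<exists>y. ys = [y]) \<or> (\<exists>y z. ys = [y, z])" using short_list[of ys] by (simp add: not_le)
    then show False
    proof (elim disjE exE)
      assume "ys = []" then show False using ys by simp
    next
      fix y assume "ys = [y]" then show False using ys assms(3) by simp
    next
      fix y z assume yz: "ys = [y, z]"
      then have "y = a" "z = b" using ys by simp_all
      then show False using ys(1) yz by simp
    qed
  qed
  moreover have "gwalk E ys" using ys(1) gwalk_mono by blast
  ultimately have "is_cycle E ys"
  proof -
    have "{b, a} = {a, b}" by blast
    then have ba: "{last ys, hd ys} \<in> E" using ys assms(2) by simp
    have "\<forall>i. Suc i < length ys \<longrightarrow> {ys ! i, ys ! Suc i} \<in> E" using gwalk_nth \<open>gwalk E ys\<close> by blast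
    then show ?thesis unfolding is_cycle_def using ys(2) ba \<open>length ys \<ge> 3\<close> by blast
  qed
  then show False using assms(1) unfolding is_tree_def acyclic_graph_def by blast
qed

lemma split_reach:
  assumes "{a, b} \<in> E" "reachable E a x"
  shows "reachable (E - {{a, b}}) a x \<or> reachable (E - {{a, b}}) b x"
  using assms(2) unfolding reachable_def[of E]
proof (induction rule: rtrancl_induct)
  case base
  then show ?case by (simp add: reach_refl)
next
  case (step y z)
  then have yz: "{y, z} \<in> E" unfolding adj_rel_def by auto
  show ?case
  proof (cases "{y, z} = {a, b}")
    case True
    then have "z = a \<or> z = b" by (metis doubleton_eq_iff)
    then show ?thesis using reach_refl by metis
  next
    case False
    then have "{y, z} \<in> E - {{a, b}}" using yz by auto
    then show ?thesis using step(3) reach_step by metis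
  qed
qed

definition C :: "'a set set \<Rightarrow> 'a \<Rightarrow> 'a \<Rightarrow> 'a set set" where
  "C E a b = component_edges (E - {{a, b}}) a"

lemma finite_E: "is_tree V E \<Longrightarrow> finite E"
proof -
  assume "is_tree V E"
  then have "simple_graph V E" unfolding is_tree_def by auto
  then have "E \<subseteq> Pow V" "finite V" unfolding simple_graph_def by auto
  then show ?thesis by (meson finite_Pow_iff rev_finite_subset)
qed

lemma cover:
  assumes "is_tree V E" "{a, b} \<in> E"
  shows "E - {{a, b}} \<subseteq> C E a b \<union> C E b a"
proof
  fix f assume f: "f \<in> E - {{a, b}}"
  have sg: "simple_graph V E" and con: "connected_graph V E" using assms(1) unfolding is_tree_def by auto
  obtain x y where xy: "f = {x, y}" "x \<in> V" "y \<in> V" using f sg unfolding simple_graph_def by blast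
  have "a \<in> V" using edge_in_V[OF sg assms(2)] by simp
  then have "reachable E a x" using con xy unfolding connected_graph_def by blast
  then have "reachable (E - {{a, b}}) a x \<or> reachable (E - {{a, b}}) b x"
    using split_reach assms(2) by metis
  moreover have "{x, y} \<in> E - {{a, b}}" using f xy by simp
  ultimately have reach2: "(reachable (E - {{a, b}}) a x \<and> reachable (E - {{a, b}}) a y) \<or>
     (reachable (E - {{a, b}}) b x \<and> reachable (E - {{a, b}}) b y)"
    using reach_step by metis
  show "f \<in> C E a b \<union> C E b a"
  proof -
    have "{b, a} = {a, b}" by blast
    then show ?thesis using f xy reach2 unfolding C_def component_edges_def by auto
  qed
qed

lemma card_cover:
  assumes "is_tree V E" "{a, b} \<in> E"
  shows "card E - 1 \<le> card (C E a b) + card (C E b a)"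
proof -
  have fin: "finite E" using finite_E assms(1) by blast
  have "card E - 1 = card (E - {{a, b}})" using assms(2) fin by simp
  also have "\<dots> \<le> card (C E a b \<union> C E b a)"
    using cover[OF assms] fin by (intro card_mono) (auto simp: C_def component_edges_def)
  also have "\<dots> \<le> card (C E a b) + card (C E b a)" by (rule card_Un_le)
  finally show ?thesis .
qed

lemma mono_aux:
  assumes "is_tree V E" "{a, b} \<in> E" "{b, t} \<in> E" "t \<noteq> a" "a \<noteq> b"
    and "reachable (E - {{a, b}}) a x"
  shows "reachable (E - {{a, b}} - {{b, t}}) a x \<or> reachable (E - {{a, b}}) a b"
  using assms(6) unfolding reachable_def[of "E - {{a, b}}" a x]
proof (induction rule: rtrancl_induct)
  case base
  then show ?case by (simp add: reach_refl)
next
  case (step y z)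
  then have yz: "{y, z} \<in> E - {{a, b}}" unfolding adj_rel_def by auto
  have sg: "simple_graph V E" using assms(1) unfolding is_tree_def by auto
  have bt: "b \<noteq> t" using edge_distinct[OF sg assms(3)] .
  show ?case
  proof (cases "reachable (E - {{a, b}}) a b")
    case True then show ?thesis by simp
  next
    case False
    then have ry: "reachable (E - {{a, b}} - {{b, t}}) a y" using step(3) by simp
    show ?thesis
    proof (cases "{y, z} = {b, t}")
      case True
      then have "y = b \<or> (y = t \<and> z = b)" by (metis doubleton_eq_iff)
      moreover have "reachable (E - {{a, b}}) a y" using ry reach_mono
        by (metis Diff_subset)
      ultimately have "reachable (E - {{a, b}}) a b" using reach_step yz by metis
      then show ?thesis by simp
    next
      case False
      then show ?thesis using ry yz reach_step by (metis Diff_iff singletonD)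
    qed
  qed
qed

lemma card_mono_step:
  assumes "is_tree V E" "{a, b} \<in> E" "{b, t} \<in> E" "t \<noteq> a"
  shows "card (C E a b) + 1 \<le> card (C E b t)"
proof -
  have sg: "simple_graph V E" using assms(1) unfolding is_tree_def by auto
  have ab: "a \<noteq> b" using edge_distinct[OF sg assms(2)] .
  have nr: "\<not> reachable (E - {{a, b}}) a b" using core[OF assms(1,2) ab] .
  have neq: "{a, b} \<noteq> {b, t}" using ab assms(4) by (metis doubleton_eq_iff)
  have R: "reachable (E - {{b, t}}) b x" if "reachable (E - {{a, b}}) a x" for x
  proof -
    have "reachable (E - {{a, b}} - {{b, t}}) a x"
      using mono_aux[OF assms ab that] nr by blast
    then have "reachable (E - {{b, t}}) a x" using reach_mono by (metis Diff_subset Diff_mono order_refl)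
    moreover have "{b, a} \<in> E - {{b, t}}" using assms(2) neq by (metis Diff_iff insert_commute singletonD)
    ultimately show ?thesis using reach_step_front by metis
  qed
  have sub: "insert {a, b} (C E a b) \<subseteq> C E b t"
  proof
    fix f assume "f \<in> insert {a, b} (C E a b)"
    then show "f \<in> C E b t"
    proof
      assume "f = {a, b}"
      moreover have ab2: "{a, b} \<in> E - {{b, t}}" using assms(2) neq by simp
      moreover have "reachable (E - {{b, t}}) b a"
        using reach_step[OF reach_refl[of _ b], of a] ab2 by (metis Diff_iff insert_commute)
      moreover have "reachable (E - {{b, t}}) b b" by (rule reach_refl)
      ultimately show ?thesis unfolding C_def component_edges_def by auto
    next
      assume fC: "f \<in> C E a b"
      then have "b \<notin> f" using nr unfolding C_def component_edges_def by blast
      then have "f \<noteq> {b, t}" by auto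
      then show ?thesis using fC R unfolding C_def component_edges_def by auto
    qed
  qed
  have "{a, b} \<notin> C E a b" unfolding C_def component_edges_def by auto
  moreover have "finite (C E b t)" using finite_E[OF assms(1)] unfolding C_def component_edges_def by auto
  moreover have "finite (C E a b)" using finite_E[OF assms(1)] unfolding C_def component_edges_def by auto
  ultimately show ?thesis using card_mono[OF _ sub] by (simp add: card_insert_if)
qed

lemma edge_other: "simple_graph V E \<Longrightarrow> e \<in> E \<Longrightarrow> r \<in> e \<Longrightarrow> \<exists>t. e = {r, t}"
  unfolding simple_graph_def by (metis insert_commute insert_iff singletonD)

lemma main_graph:
  assumes tree: "is_tree V E" and cE: "card E \<ge> 2 * L + 2"
  shows "\<exists>r\<in>V. \<forall>e\<in>E. r \<in> e \<longrightarrow> card (component_edges (E - {e}) r) \<ge> L + 1"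
proof -
  have sg: "simple_graph V E" using tree unfolding is_tree_def by auto
  define S where "S = {(a, b). {a, b} \<in> E \<and> card (C E a b) \<le> L}"
  show ?thesis
  proof (cases "S = {}")
    case True
    obtain r where r: "r \<in> V" using tree unfolding is_tree_def by auto
    have "\<forall>e\<in>E. r \<in> e \<longrightarrow> card (component_edges (E - {e}) r) \<ge> L + 1"
    proof (intro ballI impI)
      fix e assume e: "e \<in> E" "r \<in> e"
      then obtain t where et: "e = {r, t}" using edge_other[OF sg] by blast
      then have "(r, t) \<notin> S" using True by simp
      then show "card (component_edges (E - {e}) r) \<ge> L + 1"
        using e et unfolding S_def C_def by auto
    qed
    then show ?thesis using r by blast
  next
    case False
    then obtain p where "p \<in> S" by blast
    then obtain ab where ab: "ab \<in> S" and mx: "\<forall>q. q \<in> S \<longrightarrow> (\<lambda>(a, b). card (C E a b)) q \<le> (\<lambda>(a, b). card (C E a b)) ab"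
      using ex_has_greatest_nat[of "\<lambda>q. q \<in> S" p "\<lambda>(a, b). card (C E a b)" "L + 1"]
      unfolding S_def by fastforce
    obtain a b where abd: "ab = (a, b)" by fastforce
    have ab1: "{a, b} \<in> E" and ab2: "card (C E a b) \<le> L" using ab abd unfolding S_def by auto
    have mx': "card (C E x y) \<le> card (C E a b)" if "(x, y) \<in> S" for x y
      using mx that abd by fastforce
    have bV: "b \<in> V" using edge_in_V[OF sg ab1] by simp
    have "\<forall>e\<in>E. b \<in> e \<longrightarrow> card (component_edges (E - {e}) b) \<ge> L + 1"
    proof (intro ballI impI)
      fix e assume e: "e \<in> E" "b \<in> e"
      then obtain t where et: "e = {b, t}" using edge_other[OF sg] by blast
      show "card (component_edges (E - {e}) b) \<ge> L + 1"
      proof (cases "t = a")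
        case True
        have "card E - 1 \<le> card (C E a b) + card (C E b a)" using card_cover[OF tree ab1] .
        then have "card (C E b a) \<ge> L + 1" using ab2 cE by linarith
        then show ?thesis using et True unfolding C_def by simp
      next
        case False
        have st: "card (C E a b) + 1 \<le> card (C E b t)"
          using card_mono_step[OF tree ab1 _ False] e et by simp
        have "card (C E b t) \<ge> L + 1"
        proof (rule ccontr)
          assume "\<not> ?thesis"
          then have "(b, t) \<in> S" using e et unfolding S_def by auto
          then show False using mx' st by fastforce
        qed
        then show ?thesis using et unfolding C_def by simp
      qed
    qed
    then show ?thesis using bV by blast
  qed
qed


theorem lemma2p5:
  fixes k d :: nat and V :: "'a set" and E :: "'a set set" and l d' :: int
  assumes "k > 0" and "d > 0"
    and "l = \<lceil>real d / real (k + 1)\<rceil> - 1"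
    and "d' = int d + \<lceil>real k * real_of_int l * (real d / real (k + 1) - (real_of_int l + 1) / 2)\<rceil>"
    and "is_tree V E"
    and "int (card E) \<ge> d' + 1"
  shows "\<exists>r\<in>V. \<forall>e\<in>E. r \<in> e \<longrightarrow> int (card (component_edges (E - {e}) r)) \<ge> l + 1"
proof -
  define q where "q = real d / real (k + 1)"
  have qpos: "q > 0" using assms(2) unfolding q_def by simp
  have l1: "l + 1 = \<lceil>q\<rceil>" using assms(3) unfolding q_def by simp
  have lq: "real_of_int l < q" using l1 by linarith
  have l0: "l \<ge> 0" using l1 qpos by linarith
  have dq: "real d = q * (real k + 1)" unfolding q_def by (simp add: field_simps)
  have "real_of_int l * (real k + 1) < q * (real k + 1)"
    using lq by (intro mult_strict_right_mono) auto
  moreover have "2 * real_of_int l \<le> real_of_int l * (real k + 1)"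
  proof -
    have "2 \<le> real k + 1" using assms(1) by simp
    then have "real_of_int l * 2 \<le> real_of_int l * (real k + 1)"
      using l0 by (intro mult_left_mono) auto
    then show ?thesis by (simp add: mult.commute)
  qed
  ultimately have "real_of_int (2 * l) < real_of_int (int d)" using dq by (simp only: of_int_mult of_int_numeral of_int_of_nat_eq)
  then have d2: "2 * l < int d" by linarith
  have X: "real k * real_of_int l * (q - (real_of_int l + 1) / 2) \<ge> 0"
  proof (cases "l = 0")
    case True then show ?thesis by simp
  next
    case False
    then have "real_of_int l \<ge> 1" using l0 by simp
    then have "q - (real_of_int l + 1) / 2 \<ge> 0" using lq by (simp add: field_simps)
    then show ?thesis using l0 by simp
  qed
  then have "d' \<ge> int d" using assms(4) unfolding q_def by simp
  then have cE: "card E \<ge> 2 * nat l + 2" using assms(6) d2 l0 by linarith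
  obtain r where r: "r \<in> V" "\<forall>e\<in>E. r \<in> e \<longrightarrow> card (component_edges (E - {e}) r) \<ge> nat l + 1"
    using main_graph[OF assms(5) cE] by blast
  then show ?thesis using l0 by (intro bexI[of _ r]) auto
qed

end
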